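(* Let $w=w_1\cdots w_n$ be a strict pin word and $(p_1,\dots,p_n)$, together with its origin $p_0$, the pin sequence encoded by $w$. For $i\ge2$ define $q(w_{i-1},w_i)=\phi^{-1}(w_{i-1}w_i)$ if $i\ge3$, and $q(w_1,w_2)=\phi^{-1}(BC)$ where $\phi(w_1w_2)=ABC$. Then for every $i\ge2$, $q(w_{i-1},w_i)$ is a numeral, and $p_i$ lies in quadrant $q(w_{i-1},w_i)$ with respect to $\{p_0,\dots,p_{i-2}\}$.
   Context: Pins are points of $\mathbb{Z}^2$. A pin $p$ separates a set $P$ from a set $Q$ horizontally (resp. vertically) if the horizontal (resp. vertical) line through $p$ has $P$ strictly on one side and $Q$ strictly on the other. A pin sequence is a sequence $(p_1,\dots,p_k)$ of pins, no two in a common row or column, such that for every $i\ge2$, $p_i$ lies outside the bounding box of $\{p_1,\dots,p_{i-1}\}$ and either $p_i$ separates $p_{i-1}$ from $\{p_1,\dots,p_{i-2}\}$ or $p_i$ is independent from $\{p_1,\dots,p_{i-1}\}$ (does not separate it into two nonempty sets). Pin words: given a pin sequence $(p_1,\dots,p_n)$ and an origin $p_0$ such that $(p_0,\dots,p_n)$ is a pin sequence, each $p_i$ ($i\ge1$) is encoded by $U$ (resp. $D,L,R$) if $p_i$ separates $p_{i-1}$ from $\{p_0,\dots,p_{i-2}\}$ and lies above (resp. below, left of, right of) the bounding box of $\{p_0,\dots,p_{i-1}\}$, and by $1$ (resp. $2,3,4$) if $p_i$ is independent from $\{p_0,\dots,p_{i-1}\}$ and lies in the up-right (resp. up-left, bottom-left,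 bottom-right) corner region of that bounding box. Letters $1,2,3,4$ are numerals, $U,D,L,R$ directions. A strict pin word is a pin word of length $\ge2$ whose first letter is a numeral and all others directions; it determines its pin sequence $(p_0,\dots,p_n)$ up to order isomorphism. A point $x$ lies in quadrant $1$ (resp. $2,3,4$) with respect to a finite set $S$ of points if its abscissa is larger (resp. smaller, smaller, larger) than all abscissas in $S$ and its ordinate is larger (resp. larger, smaller, smaller) than all ordinates in $S$. For a strict pin word $u=u'u''$ with $|u'|=2$, $\phi(u)=\varphi(u')u''$ with $\varphi$: $1R\mapsto RUR$, $2R\mapsto LUR$, $3R\mapsto LDR$, $4R\mapsto RDR$, $1L\mapsto RUL$, $2L\mapsto LUL$, $3L\mapsto LDL$, $4L\mapsto RDL$, $1U\mapsto URU$, $2U\mapsto ULU$, $3U\mapsto DLU$, $4U\mapsto DRU$, $1D\mapsto URD$, $2D\mapsto ULD$, $3D\mapsto DLD$, $4D\mapsto DRD$. On two-letter words of directions, $\phi^{-1}$ is defined by $\phi^{-1}(UR)=\phi^{-1}(RU)=1$, $\phi^{-1}(UL)=\phi^{-1}(LU)=2$, $\phi^{-1}(DL)=\phi^{-1}(LD)=3$, $\phi^{-1}(RD)=\phi^{-1}(DR)=4$. *)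

theory Defs
  imports Main
begin

text \<open>Pins are points of Z^2, represented as pairs (abscissa, ordinate).\<close>
type_synonym pin = "int \<times> int"

datatype letter = N1 | N2 | N3 | N4 | U | D | L | R

fun is_numeral :: "letter \<Rightarrow> bool" where
  "is_numeral N1 = True" | "is_numeral N2 = True" | "is_numeral N3 = True"
| "is_numeral N4 = True" | "is_numeral _ = False"

fun is_direction :: "letter \<Rightarrow> bool" where
  "is_direction U = True" | "is_direction D = True" | "is_direction L = True"
| "is_direction R = True" | "is_direction _ = False"

definition sep_horiz :: "pin \<Rightarrow> pin set \<Rightarrow> pin set \<Rightarrow> bool" where
  "sep_horiz p P Q \<longleftrightarrow>
     ((\<forall>a\<in>P. snd a < snd p) \<and> (\<forall>b\<in>Q. snd p < snd b)) \<or>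
     ((\<forall>a\<in>P. snd p < snd a) \<and> (\<forall>b\<in>Q. snd b < snd p))"

definition sep_vert :: "pin \<Rightarrow> pin set \<Rightarrow> pin set \<Rightarrow> bool" where
  "sep_vert p P Q \<longleftrightarrow>
     ((\<forall>a\<in>P. fst a < fst p) \<and> (\<forall>b\<in>Q. fst p < fst b)) \<or>
     ((\<forall>a\<in>P. fst p < fst a) \<and> (\<forall>b\<in>Q. fst b < fst p))"

definition separates :: "pin \<Rightarrow> pin set \<Rightarrow> pin set \<Rightarrow> bool" where
  "separates p P Q \<longleftrightarrow> sep_horiz p P Q \<or> sep_vert p P Q"

definition independent :: "pin \<Rightarrow> pin set \<Rightarrow> bool" where
  "independent p S \<longleftrightarrow>
     \<not> (\<exists>P Q. P \<noteq> {} \<and> Q \<noteq> {} \<and> P \<union> Q = S \<and> separates p P Q)"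

definition in_bbox :: "pin \<Rightarrow> pin set \<Rightarrow> bool" where
  "in_bbox p S \<longleftrightarrow>
     (\<exists>a\<in>S. fst a \<le> fst p) \<and> (\<exists>a\<in>S. fst p \<le> fst a) \<and>
     (\<exists>a\<in>S. snd a \<le> snd p) \<and> (\<exists>a\<in>S. snd p \<le> snd a)"

text \<open>Pin sequence (p_0,...,p_{k-1}) as a list, 0-indexed.\<close>
definition pin_sequence :: "pin list \<Rightarrow> bool" where
  "pin_sequence ps \<longleftrightarrow>
     (\<forall>i<length ps. \<forall>j<length ps. i \<noteq> j \<longrightarrow>
         fst (ps!i) \<noteq> fst (ps!j) \<and> snd (ps!i) \<noteq> snd (ps!j)) \<and>
     (\<forall>i. 1 \<le> i \<and> i < length ps \<longrightarrow>
         \<not> in_bbox (ps!i) (set (take i ps)) \<and>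
         (separates (ps!i) {ps!(i-1)} (set (take (i-1) ps)) \<or>
          independent (ps!i) (set (take i ps))))"

fun in_quadrant :: "letter \<Rightarrow> pin \<Rightarrow> pin set \<Rightarrow> bool" where
  "in_quadrant N1 x S = (\<forall>s\<in>S. fst s < fst x \<and> snd s < snd x)"
| "in_quadrant N2 x S = (\<forall>s\<in>S. fst x < fst s \<and> snd s < snd x)"
| "in_quadrant N3 x S = (\<forall>s\<in>S. fst x < fst s \<and> snd x < snd s)"
| "in_quadrant N4 x S = (\<forall>s\<in>S. fst s < fst x \<and> snd x < snd s)"
| "in_quadrant _ x S = False"

definition letter_encodes :: "letter \<Rightarrow> pin list \<Rightarrow> nat \<Rightarrow> bool" where
  "letter_encodes c ps i \<longleftrightarrow>
    (let p = ps!i; S = set (take i ps); sep = separates p {ps!(i-1)} (set (take (i-1) ps)) in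
     (case c of
        U \<Rightarrow> sep \<and> (\<forall>s\<in>S. snd s < snd p)
      | D \<Rightarrow> sep \<and> (\<forall>s\<in>S. snd p < snd s)
      | L \<Rightarrow> sep \<and> (\<forall>s\<in>S. fst p < fst s)
      | R \<Rightarrow> sep \<and> (\<forall>s\<in>S. fst s < fst p)
      | N1 \<Rightarrow> independent p S \<and> in_quadrant N1 p S
      | N2 \<Rightarrow> independent p S \<and> in_quadrant N2 p S
      | N3 \<Rightarrow> independent p S \<and> in_quadrant N3 p S
      | N4 \<Rightarrow> independent p S \<and> in_quadrant N4 p S))"

definition encodes :: "letter list \<Rightarrow> pin list \<Rightarrow> bool" where
  "encodes w ps \<longleftrightarrow> length ps = length w + 1 \<and> pin_sequence ps \<and>
     (\<forall>i<length w. letter_encodes (w!i) ps (i+1))"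

definition strict_pin_word :: "letter list \<Rightarrow> bool" where
  "strict_pin_word w \<longleftrightarrow> length w \<ge> 2 \<and> is_numeral (w!0) \<and>
     (\<forall>i. 1 \<le> i \<and> i < length w \<longrightarrow> is_direction (w!i))"

fun varphi :: "letter \<Rightarrow> letter \<Rightarrow> (letter \<times> letter \<times> letter) option" where
  "varphi N1 R = Some (R,U,R)" | "varphi N2 R = Some (L,U,R)"
| "varphi N3 R = Some (L,D,R)" | "varphi N4 R = Some (R,D,R)"
| "varphi N1 L = Some (R,U,L)" | "varphi N2 L = Some (L,U,L)"
| "varphi N3 L = Some (L,D,L)" | "varphi N4 L = Some (R,D,L)"
| "varphi N1 U = Some (U,R,U)" | "varphi N2 U = Some (U,L,U)"
| "varphi N3 U = Some (D,L,U)" | "varphi N4 U = Some (D,R,U)"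
| "varphi N1 D = Some (U,R,D)" | "varphi N2 D = Some (U,L,D)"
| "varphi N3 D = Some (D,L,D)" | "varphi N4 D = Some (D,R,D)"
| "varphi _ _ = None"

fun phi_inv :: "letter \<Rightarrow> letter \<Rightarrow> letter option" where
  "phi_inv U R = Some N1" | "phi_inv R U = Some N1"
| "phi_inv U L = Some N2" | "phi_inv L U = Some N2"
| "phi_inv D L = Some N3" | "phi_inv L D = Some N3"
| "phi_inv R D = Some N4" | "phi_inv D R = Some N4"
| "phi_inv _ _ = None"

text \<open>q(w_{i-1}, w_i) for 2 \<le> i \<le> n (1-indexed), where w is 0-indexed as a list.\<close>
definition q :: "letter list \<Rightarrow> nat \<Rightarrow> letter option" where
  "q w i = (if i \<ge> 3 then phi_inv (w!(i-2)) (w!(i-1))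
            else (case varphi (w!0) (w!1) of
                    Some (A, B, C) \<Rightarrow> phi_inv B C
                  | None \<Rightarrow> None))"

end

theory Submission
  imports Defs
begin

fun dirc :: "letter \<Rightarrow> pin \<Rightarrow> pin set \<Rightarrow> bool" where
  "dirc U x S = (\<forall>s\<in>S. snd s < snd x)"
| "dirc D x S = (\<forall>s\<in>S. snd x < snd s)"
| "dirc L x S = (\<forall>s\<in>S. fst x < fst s)"
| "dirc R x S = (\<forall>s\<in>S. fst s < fst x)"
| "dirc _ x S = False"

lemma enc_dir:
  assumes "letter_encodes d ps i" "is_direction d"
  shows "dirc d (ps!i) (set (take i ps)) \<and> separates (ps!i) {ps!(i-1)} (set (take (i-1) ps))"
  using assms by (cases d) (auto simp: letter_encodes_def Let_def)

lemma enc_num: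
  assumes "letter_encodes k ps i" "is_numeral k"
  shows "in_quadrant k (ps!i) (set (take i ps))"
  using assms by (cases k) (auto simp: letter_encodes_def Let_def)

lemma geo3:
  assumes "Q' \<noteq> {}"
    and "is_direction d1" "is_direction d2"
    and "dirc d1 y (insert z Q')" "separates y {z} Q'"
    and "dirc d2 x (insert y (insert z Q'))" "separates x {y} (insert z Q')"
  shows "\<exists>k. phi_inv d1 d2 = Some k \<and> is_numeral k \<and> in_quadrant k x (insert z Q')"
proof -
  obtain a where a: "a \<in> Q'" using assms(1) by blast
  show ?thesis
    using assms(2-) a
    by (cases d1; cases d2; simp add: separates_def sep_horiz_def sep_vert_def;
        smt (verit))
qed

lemma geo2:
  assumes "is_numeral k" "is_direction d"
    and "in_quadrant k y {z}"
    and "dirc d x {z, y}" "separates x {y} {z}"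
  shows "\<exists>k'. (case varphi k d of Some (A, B, C) \<Rightarrow> phi_inv B C | None \<Rightarrow> None) = Some k'
     \<and> is_numeral k' \<and> in_quadrant k' x {z}"
  using assms
  by (cases k; cases d; simp add: separates_def sep_horiz_def sep_vert_def; smt (verit))


lemma set_take_Suc: "i < length xs \<Longrightarrow> set (take (Suc i) xs) = insert (xs!i) (set (take i xs))"
  by (simp add: take_Suc_conv_app_nth)

theorem lemma6:
  fixes w :: "letter list" and ps :: "pin list"
  assumes "strict_pin_word w"
    and "encodes w ps"
  shows "\<forall>i. 2 \<le> i \<and> i \<le> length w \<longrightarrow>
           (\<exists>k. q w i = Some k \<and> is_numeral k \<and>
                in_quadrant k (ps!i) (set (take (i-1) ps)))"
proof (intro allI impI)
  fix i assume i: "2 \<le> i \<and> i \<le> length w"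
  have len: "length ps = length w + 1" using assms(2) by (simp add: encodes_def)
  have le: "\<And>j. 1 \<le> j \<Longrightarrow> j \<le> length w \<Longrightarrow> letter_encodes (w!(j-1)) ps j"
  proof -
    fix j assume "1 \<le> j" "j \<le> length w"
    then have "j - 1 < length w" by simp
    then have "letter_encodes (w!(j-1)) ps (j-1+1)" using assms(2) by (simp add: encodes_def)
    then show "letter_encodes (w!(j-1)) ps j" using \<open>1 \<le> j\<close> by simp
  qed
  have dirw: "\<And>j. 1 \<le> j \<Longrightarrow> j < length w \<Longrightarrow> is_direction (w!j)"
    using assms(1) by (simp add: strict_pin_word_def)
  show "\<exists>k. q w i = Some k \<and> is_numeral k \<and> in_quadrant k (ps!i) (set (take (i-1) ps))"
  proof (cases "i \<ge> 3")
    case True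
    define Q' where "Q' = set (take (i-2) ps)"
    have "0 < length (take (i-2) ps)" using True len i by simp
    then have "take (i-2) ps ! 0 \<in> set (take (i-2) ps)" by (rule nth_mem)
    then have "ps!0 \<in> Q'" unfolding Q'_def using True by simp
    then have ne: "Q' \<noteq> {}" by blast
    have d1: "is_direction (w!(i-2))" using dirw True i by simp
    have d2: "is_direction (w!(i-1))" using dirw True i by simp
    have e1: "letter_encodes (w!(i-2)) ps (i-1)"
    proof -
      have "letter_encodes (w!(i-1-1)) ps (i-1)" using le[of "i-1"] True i by simp
      moreover have "i-1-1 = i-2" by simp
      ultimately show ?thesis by simp
    qed
    have e2: "letter_encodes (w!(i-1)) ps i" using le True i by simp
    have s1: "set (take (i-1) ps) = insert (ps!(i-2)) Q'"
    proof -
      have "Suc (i-2) = i-1" using True by simp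
      moreover have "i - 2 < length ps" using True i len by simp
      ultimately show ?thesis unfolding Q'_def using set_take_Suc[of "i-2" ps] by simp
    qed
    have s2: "set (take i ps) = insert (ps!(i-1)) (set (take (i-1) ps))"
      using set_take_Suc[of "i-1" ps] True i len by simp
    have A: "dirc (w!(i-2)) (ps!(i-1)) (insert (ps!(i-2)) Q') \<and> separates (ps!(i-1)) {ps!(i-2)} Q'"
      using enc_dir[OF e1 d1] s1 unfolding Q'_def
      by (metis diff_diff_left one_add_one)
    have B: "dirc (w!(i-1)) (ps!i) (insert (ps!(i-1)) (insert (ps!(i-2)) Q')) \<and>
        separates (ps!i) {ps!(i-1)} (insert (ps!(i-2)) Q')"
      using enc_dir[OF e2 d2] s1 s2 by simp
    have "q w i = phi_inv (w!(i-2)) (w!(i-1))" using True by (simp add: q_def)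
    then show ?thesis using geo3[OF ne d1 d2 conjunct1[OF A] conjunct2[OF A] conjunct1[OF B] conjunct2[OF B]] s1 by simp
  next
    case False
    then have i2: "i = 2" using i by simp
    have n0: "is_numeral (w!0)" using assms(1) by (simp add: strict_pin_word_def)
    have d: "is_direction (w!1)" using dirw i by simp
    have e1: "letter_encodes (w!0) ps 1" using le[of 1] i by simp
    have e2: "letter_encodes (w!1) ps 2" using le[of 2] i by simp
    have t1: "set (take 1 ps) = {ps!0}" using len
      by (metis One_nat_def add_gr_0 empty_set less_one set_take_Suc take_0 zero_less_one)
    have t2: "set (take 2 ps) = {ps!0, ps!1}" using len i set_take_Suc[of 1 ps] t1
      by (cases w) (auto simp: numeral_2_eq_2 insert_commute)
    have A: "in_quadrant (w!0) (ps!1) {ps!0}" using enc_num[OF e1 n0] t1 by simp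
    have B: "dirc (w!1) (ps!2) {ps!0, ps!1} \<and> separates (ps!2) {ps!1} {ps!0}"
      using enc_dir[OF e2 d] t1 t2 by simp
    show ?thesis using geo2[OF n0 d A] B i2 t1 by (simp add: q_def)
  qed
qed

end
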